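(* Every NSS topological group is TAP.
   Context: Topological groups are Hausdorff. A topological group is NSS if some open neighborhood of the identity contains no nontrivial subgroup. A subset $A$ of a topological group $G$ is absolutely productive in $G$ if for every injection $a:\mathbb{N}\to A$ and every map $z:\mathbb{N}\to\mathbb{Z}$ the sequence $\left(\prod_{n=0}^{k}a(n)^{z(n)}\right)_{k\in\mathbb{N}}$ converges to some element of $G$. $G$ is TAP if every absolutely productive subset of $G$ is finite. *)

theory Defs
  imports "HOL-Analysis.Analysis"
begin

text \<open>Topological groups are modelled as types of class
  topological_group_add (a possibly non-abelian group, written additively, with
  jointly continuous addition and continuous inversion) together with t2_space
  (Hausdorff).\<close>

definition zmult :: "int \<Rightarrow> 'a::group_add \<Rightarrow> 'a" where
  "zmult z g = (if 0 \<le> z then ((\<lambda>x. x + g) ^^ nat z) 0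
                else - (((\<lambda>x. x + g) ^^ nat (- z)) 0))"

definition partial_prod :: "(nat \<Rightarrow> 'a::group_add) \<Rightarrow> (nat \<Rightarrow> int) \<Rightarrow> nat \<Rightarrow> 'a" where
  "partial_prod a z k = sum_list (map (\<lambda>n. zmult (z n) (a n)) [0..<Suc k])"

definition is_subgroup :: "'a::group_add set \<Rightarrow> bool" where
  "is_subgroup H \<longleftrightarrow> 0 \<in> H \<and> (\<forall>x\<in>H. \<forall>y\<in>H. x + y \<in> H) \<and> (\<forall>x\<in>H. - x \<in> H)"

definition NSS :: "'a::{topological_group_add, t2_space} itself \<Rightarrow> bool" where
  "NSS _ \<longleftrightarrow> (\<exists>U::'a set. open U \<and> 0 \<in> U \<and>
      (\<forall>H. is_subgroup H \<and> H \<subseteq> U \<longrightarrow> H = {0}))"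

definition absolutely_productive :: "'a::{topological_group_add, t2_space} set \<Rightarrow> bool" where
  "absolutely_productive A \<longleftrightarrow>
     (\<forall>a::nat \<Rightarrow> 'a. \<forall>z::nat \<Rightarrow> int. inj a \<and> range a \<subseteq> A \<longrightarrow>
        (\<exists>g. partial_prod a z \<longlonglongrightarrow> g))"

definition TAP :: "'a::{topological_group_add, t2_space} itself \<Rightarrow> bool" where
  "TAP _ \<longleftrightarrow> (\<forall>A::'a set. absolutely_productive A \<longrightarrow> finite A)"

end

theory Submission
  imports Defs
begin

definition fpow :: "'a::group_add \<Rightarrow> nat \<Rightarrow> 'a" where
  "fpow x n = ((\<lambda>y. y + x) ^^ n) 0"

lemma fpow_0[simp]: "fpow x 0 = 0" by (simp add: fpow_def)
lemma fpow_Suc: "fpow x (Suc n) = fpow x n + x" by (simp add: fpow_def)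

lemma fpow_Suc': "fpow x (Suc n) = x + fpow x n"
proof (induction n)
  case 0 then show ?case by (simp add: fpow_Suc)
next
  case (Suc n)
  have "fpow x (Suc (Suc n)) = (x + fpow x n) + x" using Suc by (simp only: fpow_Suc)
  also have "\<dots> = x + (fpow x n + x)" by (simp only: add.assoc)
  finally show ?case by (simp only: fpow_Suc)
qed

lemma fpow_add: "fpow x (m + n) = fpow x m + fpow x n"
  by (induction n) (simp_all add: fpow_Suc add.assoc)

lemma fpow_comm: "fpow x m + fpow x n = fpow x n + fpow x m"
proof -
  have "fpow x m + fpow x n = fpow x (m + n)" by (rule fpow_add[symmetric])
  also have "m + n = n + m" by (rule add.commute)
  finally show ?thesis by (simp only: fpow_add)
qed

lemma comm_minus: "(a::'a::group_add) + b = b + a \<Longrightarrow> a + - b = - b + a"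
proof -
  assume h: "a + b = b + a"
  have "a + - b = - b + (b + (a + - b))" by simp
  also have "\<dots> = - b + ((b + a) + - b)" by (simp only: add.assoc)
  also have "\<dots> = - b + ((a + b) + - b)" by (simp only: h)
  also have "\<dots> = - b + a" by (simp add: add.assoc)
  finally show ?thesis .
qed

lemma fpow_diff: "fpow x m + - fpow x n \<in> range (fpow x) \<union> uminus ` range (fpow x)"
proof (cases "n \<le> m")
  case True
  then have "fpow x m = fpow x (m - n) + fpow x n" using fpow_add[of x "m - n" n] True by simp
  then have "fpow x m + - fpow x n = fpow x (m - n)" by (simp add: add.assoc)
  then show ?thesis by auto
next
  case False
  then have "fpow x n = fpow x m + fpow x (n - m)" using fpow_add[of x m "n - m"] False by simp
  then have "fpow x m + - fpow x n = fpow x m + (- fpow x (n - m) + - fpow x m)"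
    by (simp add: minus_add)
  also have "\<dots> = (fpow x m + - fpow x (n - m)) + - fpow x m"
    by (simp only: add.assoc)
  also have "\<dots> = (- fpow x (n - m) + fpow x m) + - fpow x m"
    by (rule arg_cong[where f="\<lambda>t. t + - fpow x m", OF comm_minus[OF fpow_comm[of x m "n-m"]]])
  also have "\<dots> = - fpow x (n - m)"
    by (simp only: add.assoc add.right_inverse add_0_right)
  finally show ?thesis by auto
qed

lemma cyc_subgroup: "is_subgroup (range (fpow x) \<union> uminus ` range (fpow x))"
  unfolding is_subgroup_def
proof (intro conjI ballI)
  show "0 \<in> range (fpow x) \<union> uminus ` range (fpow x)"
    by (metis UnI1 fpow_0 rangeI)
next
  fix u v assume u: "u \<in> range (fpow x) \<union> uminus ` range (fpow x)"
    and v: "v \<in> range (fpow x) \<union> uminus ` range (fpow x)"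
  from u v show "u + v \<in> range (fpow x) \<union> uminus ` range (fpow x)"
  proof (elim UnE imageE rangeE)
    fix m n assume "u = fpow x m" "v = fpow x n"
    then have "u + v = fpow x (m + n)" by (simp only: fpow_add)
    then show ?thesis by auto
  next
    fix m n w assume "u = fpow x m" "w = fpow x n" "v = - w"
    then show ?thesis using fpow_diff by auto
  next
    fix m n w assume "w = fpow x m" "u = - w" "v = fpow x n"
    then have "u + v = fpow x n + - fpow x m"
      using comm_minus[OF fpow_comm[of x n m]] by simp
    then show ?thesis using fpow_diff by auto
  next
    fix m n w w' assume "w = fpow x m" "u = - w" "w' = fpow x n" "v = - w'"
    then have "u + v = - fpow x (n + m)" by (simp add: fpow_add minus_add)
    then show ?thesis by auto
  qed
next
  fix u assume "u \<in> range (fpow x) \<union> uminus ` range (fpow x)"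
  then show "- u \<in> range (fpow x) \<union> uminus ` range (fpow x)" by auto
qed

lemma zmult_range: "range (fpow x) \<union> uminus ` range (fpow x) \<subseteq> range (\<lambda>w. zmult w x)"
proof
  fix u assume "u \<in> range (fpow x) \<union> uminus ` range (fpow x)"
  then show "u \<in> range (\<lambda>w. zmult w x)"
  proof (elim UnE imageE rangeE)
    fix n assume "u = fpow x n"
    then have "u = zmult (int n) x" by (simp add: zmult_def fpow_def)
    then show ?thesis by auto
  next
    fix n w assume h: "w = fpow x n" "u = - w"
    show ?thesis
    proof (cases "n = 0")
      case True then have "u = zmult 0 x" using h by (simp add: zmult_def)
      then show ?thesis by auto
    next
      case False
      then have "\<not> 0 \<le> - int n" by simp
      then have "zmult (- int n) x = - (((\<lambda>y. y + x) ^^ nat (- (- int n))) 0)"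
        unfolding zmult_def by (simp only: if_False)
      then have "u = zmult (- int n) x" using h by (simp add: fpow_def)
      then show ?thesis by auto
    qed
  qed
qed

lemma partial_prod_Suc: "partial_prod a z (Suc k) = partial_prod a z k + zmult (z (Suc k)) (a (Suc k))"
  by (simp add: partial_prod_def add.assoc)

theorem theorem4p9:
  assumes "NSS TYPE('a::{topological_group_add, t2_space})"
  shows "TAP TYPE('a)"
proof -
  obtain U :: "'a set" where U0: "open U" "0 \<in> U" "\<forall>H. is_subgroup H \<and> H \<subseteq> U \<longrightarrow> H = {0}"
    using assms unfolding NSS_def by (elim exE conjE) (rule that)
  have U3: "H = {0}" if "is_subgroup H" "H \<subseteq> U" for H using U0(3) that by (simp only: simp_thms)
  note U = U0(1,2) U3
  have ex: "\<exists>w. zmult w x \<notin> U" if "x \<noteq> 0" for x :: 'a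
  proof (rule ccontr)
    assume "\<not> ?thesis"
    then have "range (\<lambda>w. zmult w x) \<subseteq> U" by auto
    then have "range (fpow x) \<union> uminus ` range (fpow x) \<subseteq> U" using zmult_range by (rule order_trans[rotated])
    then have H0: "range (fpow x) \<union> uminus ` range (fpow x) = {0}" by (rule U(3)[OF cyc_subgroup])
    have "fpow x 1 = x" by (simp add: fpow_def)
    then have "x \<in> range (fpow x) \<union> uminus ` range (fpow x)" by (metis UnI1 rangeI)
    then show False using that by (simp only: H0 singleton_iff)
  qed
  show ?thesis unfolding TAP_def
  proof (intro allI impI, rule ccontr)
    fix A :: "'a set" assume ap: "absolutely_productive A" and inf: "infinite A"
    obtain a :: "nat \<Rightarrow> 'a" where a: "inj a" "range a \<subseteq> A" using infinite_countable_subset[OF inf] by blast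
    define z where "z n = (if a n = 0 then 0 else (SOME w. zmult w (a n) \<notin> U))" for n
    have zn: "a n \<noteq> 0 \<Longrightarrow> zmult (z n) (a n) \<notin> U" for n
      unfolding z_def using someI_ex[OF ex[of "a n"]] by simp
    obtain g where g: "partial_prod a z \<longlonglongrightarrow> g" using ap a unfolding absolutely_productive_def by blast
    define x where "x n = zmult (z n) (a n)" for n
    have "(\<lambda>k. - partial_prod a z k + partial_prod a z (Suc k)) \<longlonglongrightarrow> - g + g"
      by (intro tendsto_add tendsto_minus g LIMSEQ_Suc)
    moreover have "(\<lambda>k. - partial_prod a z k + partial_prod a z (Suc k)) = (\<lambda>k. x (Suc k))"
      by (simp add: partial_prod_Suc x_def add.assoc[symmetric])
    ultimately have "(\<lambda>k. x (Suc k)) \<longlonglongrightarrow> 0" by simp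
    then have "x \<longlonglongrightarrow> 0" by (rule LIMSEQ_imp_Suc)
    then have "eventually (\<lambda>n. x n \<in> U) sequentially" using U(1,2) by (rule topological_tendstoD)
    then obtain N where N: "\<And>n. n \<ge> N \<Longrightarrow> x n \<in> U" by (auto simp: eventually_sequentially)
    have "a N \<noteq> a (Suc N)" using a(1) by (simp add: inj_eq)
    then have "a N \<noteq> 0 \<or> a (Suc N) \<noteq> 0" by auto
    moreover have "x N \<in> U" "x (Suc N) \<in> U" using N by auto
    ultimately show False using zn[of N] zn[of "Suc N"] unfolding x_def by blast
  qed
qed

end
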